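(* Let $G=(K\cup I,E)$ be a split graph and $(V,\mathcal{F})$ the split graph vertex shelling antimatroid defined on $G$. Then the family $\mathcal{F}_*$ of $*$-feasible sets equals the family of filters of the poset $(K\cup I,\prec)$.
   Context: A split graph $G=(K\cup I,E)$ is a finite simple graph whose vertex set $V=K\cup I$ comes with a fixed partition into a clique $K$ and an independent set $I$. We write $u\sim v$ for adjacency; for $F\subseteq V$, $N(F)$ is the set of vertices of $V\setminus F$ adjacent to some vertex of $F$. A vertex is simplicial if its neighbours induce a clique. The split graph vertex shelling antimatroid of $G$ is $(V,\mathcal{F})$ where $F\subseteq V$ is feasible iff there is an ordering $f_1,\dots,f_{|F|}$ of $F$ such that each $f_j$ is simplicial in $G$ minus $\{f_1,\dots,f_{j-1}\}$ (the empty set is feasible). A feasible set $F$ is $*$-feasible if $N(F)\subseteq K$; $\mathcal{F}_*$ is the family of $*$-feasible sets. The strict order $\prec$ on $K\cup I$ is defined by $u\prec v$ iff $u\in K$, $v\in I$ and $u\sim v$ (its reflexive closure is a partial order of height at most two). A filter of a poset is a subset $F$ such that $a\in F$ and $a\preceq b$ imply $b\in F$. *)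

theory Defs
  imports Main
begin

definition split_graph :: "'a set \<Rightarrow> 'a set \<Rightarrow> ('a \<Rightarrow> 'a \<Rightarrow> bool) \<Rightarrow> bool" where
  "split_graph K I E \<longleftrightarrow> finite K \<and> finite I \<and> K \<inter> I = {}
     \<and> (\<forall>u v. E u v \<longrightarrow> E v u) \<and> (\<forall>u. \<not> E u u)
     \<and> (\<forall>u v. E u v \<longrightarrow> u \<in> K \<union> I \<and> v \<in> K \<union> I)
     \<and> (\<forall>u\<in>K. \<forall>v\<in>K. u \<noteq> v \<longrightarrow> E u v)
     \<and> (\<forall>u\<in>I. \<forall>v\<in>I. \<not> E u v)"

definition simplicial_in :: "'a set \<Rightarrow> ('a \<Rightarrow> 'a \<Rightarrow> bool) \<Rightarrow> 'a \<Rightarrow> bool" where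
  "simplicial_in W E v \<longleftrightarrow> v \<in> W \<and>
     (\<forall>x\<in>W. \<forall>y\<in>W. E v x \<and> E v y \<and> x \<noteq> y \<longrightarrow> E x y)"

definition shelling_feasible :: "'a set \<Rightarrow> ('a \<Rightarrow> 'a \<Rightarrow> bool) \<Rightarrow> 'a set \<Rightarrow> bool" where
  "shelling_feasible V E F \<longleftrightarrow>
     (\<exists>fs. distinct fs \<and> set fs = F \<and>
        (\<forall>j < length fs. simplicial_in (V - set (take j fs)) E (fs ! j)))"

definition nbhd :: "'a set \<Rightarrow> ('a \<Rightarrow> 'a \<Rightarrow> bool) \<Rightarrow> 'a set \<Rightarrow> 'a set" where
  "nbhd V E F = {v \<in> V - F. \<exists>u\<in>F. E u v}"

definition star_feasible :: "'a set \<Rightarrow> 'a set \<Rightarrow> ('a \<Rightarrow> 'a \<Rightarrow> bool) \<Rightarrow> 'a set \<Rightarrow> bool" where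
  "star_feasible K I E F \<longleftrightarrow> shelling_feasible (K \<union> I) E F \<and> nbhd (K \<union> I) E F \<subseteq> K"

definition split_prec :: "'a set \<Rightarrow> 'a set \<Rightarrow> ('a \<Rightarrow> 'a \<Rightarrow> bool) \<Rightarrow> 'a \<Rightarrow> 'a \<Rightarrow> bool" where
  "split_prec K I E u v \<longleftrightarrow> u \<in> K \<and> v \<in> I \<and> E u v"

definition is_filter :: "'a set \<Rightarrow> ('a \<Rightarrow> 'a \<Rightarrow> bool) \<Rightarrow> 'a set \<Rightarrow> bool" where
  "is_filter V le F \<longleftrightarrow> F \<subseteq> V \<and> (\<forall>a\<in>F. \<forall>b\<in>V. le a b \<longrightarrow> b \<in> F)"

end

theory Submission
  imports Defs
begin

lemma nth_notin_take:
  assumes "distinct fs" "j < length fs" shows "fs ! j \<notin> set (take j fs)"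
proof
  assume "fs ! j \<in> set (take j fs)"
  then obtain i where i: "i < length (take j fs)" "take j fs ! i = fs ! j"
    by (auto simp: in_set_conv_nth)
  hence "i < j" "fs ! i = fs ! j" by auto
  thus False using assms nth_eq_iff_index_eq[of fs i j] by auto
qed

lemma filter_feasible:
  assumes sg: "split_graph K I E"
    and fil: "is_filter (K \<union> I) (\<lambda>a b. a = b \<or> split_prec K I E a b) F"
  shows "shelling_feasible (K \<union> I) E F"
proof -
  have fin: "finite K" "finite I" and disj: "K \<inter> I = {}"
    and sym: "\<And>u v. E u v \<Longrightarrow> E v u"
    and inV: "\<And>u v. E u v \<Longrightarrow> u \<in> K \<union> I \<and> v \<in> K \<union> I"
    and cl: "\<And>u v. u\<in>K \<Longrightarrow> v\<in>K \<Longrightarrow> u \<noteq> v \<Longrightarrow> E u v"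
    and ind: "\<And>u v. u\<in>I \<Longrightarrow> v\<in>I \<Longrightarrow> \<not> E u v"
    using sg unfolding split_graph_def by blast+
  have FV: "F \<subseteq> K \<union> I" using fil unfolding is_filter_def by blast
  have up: "\<And>a b. a \<in> F \<Longrightarrow> a \<in> K \<Longrightarrow> b \<in> I \<Longrightarrow> E a b \<Longrightarrow> b \<in> F"
    using fil unfolding is_filter_def split_prec_def by blast
  obtain xs where xs: "distinct xs" "set xs = F \<inter> I"
    using finite_distinct_list[of "F \<inter> I"] fin by auto
  obtain ys where ys: "distinct ys" "set ys = F \<inter> K"
    using finite_distinct_list[of "F \<inter> K"] fin by auto
  define fs where "fs = xs @ ys"
  have dfs: "distinct fs" using xs ys disj by (auto simp: fs_def)
  have sfs: "set fs = F" using xs ys FV by (auto simp: fs_def)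
  have "simplicial_in (K \<union> I - set (take j fs)) E (fs ! j)" if j: "j < length fs" for j
  proof (cases "j < length xs")
    case True
    have v: "fs ! j = xs ! j" using True by (simp add: fs_def nth_append)
    have vI: "xs ! j \<in> I" using xs True nth_mem by blast
    have "xs ! j \<notin> set (take j fs)"
      using nth_notin_take[OF dfs j] v by simp
    moreover have "xs ! j \<in> K \<union> I" using vI by auto
    moreover have "x \<in> K" if "E (xs ! j) x" for x
    proof -
      have "x \<in> K \<union> I" using inV that by blast
      moreover have "x \<notin> I" using ind vI that by blast
      ultimately show ?thesis by blast
    qed
    ultimately show ?thesis unfolding simplicial_in_def v
      using cl by blast
  next
    case False
    then have v: "fs ! j = ys ! (j - length xs)" by (simp add: fs_def nth_append)
    have jy: "j - length xs < length ys" using j False by (simp add: fs_def)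
    have uK: "ys ! (j - length xs) \<in> K" using ys jy nth_mem by blast
    have notin: "fs ! j \<notin> set (take j fs)"
      using nth_notin_take[OF dfs j] by simp
    have sub: "F \<inter> I \<subseteq> set (take j fs)"
    proof -
      have "take j fs = xs @ take (j - length xs) ys" using False by (simp add: fs_def)
      thus ?thesis using xs by auto
    qed
    have nb: "x \<in> K" if "x \<in> K \<union> I - set (take j fs)" "E (ys ! (j - length xs)) x" for x
    proof -
      have "x \<in> K \<union> I" using that by auto
      moreover have "x \<notin> I"
      proof
        assume "x \<in> I"
        moreover have "ys ! (j - length xs) \<in> F" using ys jy nth_mem by blast
        ultimately have "x \<in> F" using up uK that(2) by blast
        thus False using sub that(1) \<open>x \<in> I\<close> by auto
      qed
      ultimately show ?thesis by auto
    qed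
    have notin2: "ys ! (j - length xs) \<notin> set (take j fs)" using notin v by simp
    show ?thesis unfolding simplicial_in_def v
      using uK notin2 nb cl by blast
  qed
  thus ?thesis unfolding shelling_feasible_def using dfs sfs by blast
qed

theorem mainTheorem8:
  fixes K I :: "'a set" and E :: "'a \<Rightarrow> 'a \<Rightarrow> bool"
  assumes "split_graph K I E"
  shows "{F. star_feasible K I E F} =
         {F. is_filter (K \<union> I) (\<lambda>a b. a = b \<or> split_prec K I E a b) F}"
proof (rule set_eqI, unfold mem_Collect_eq, rule iffI)
  fix F assume sf: "star_feasible K I E F"
  have disj: "K \<inter> I = {}" and ind: "\<And>u v. u\<in>I \<Longrightarrow> v\<in>I \<Longrightarrow> \<not> E u v"
    using assms unfolding split_graph_def by blast+
  have FV: "F \<subseteq> K \<union> I"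
  proof
    fix x assume x: "x \<in> F"
    obtain fs where fs: "set fs = F" "\<forall>j < length fs. simplicial_in (K \<union> I - set (take j fs)) E (fs ! j)"
      using sf unfolding star_feasible_def shelling_feasible_def by blast
    obtain j where j: "j < length fs" "fs ! j = x" using x fs(1) by (metis in_set_conv_nth)
    have "x \<in> K \<union> I - set (take j fs)" using fs(2) j unfolding simplicial_in_def by blast
    thus "x \<in> K \<union> I" by blast
  qed
  have nb: "nbhd (K \<union> I) E F \<subseteq> K" using sf unfolding star_feasible_def by blast
  show "is_filter (K \<union> I) (\<lambda>a b. a = b \<or> split_prec K I E a b) F"
    unfolding is_filter_def split_prec_def
  proof (intro conjI FV ballI impI)
    fix a b assume a: "a \<in> F" and b: "b \<in> K \<union> I" and r: "a = b \<or> a \<in> K \<and> b \<in> I \<and> E a b"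
    show "b \<in> F"
    proof (rule ccontr)
      assume "b \<notin> F"
      with r a have "b \<in> I" "E a b" by blast+
      hence "b \<in> nbhd (K \<union> I) E F" using a b \<open>b \<notin> F\<close> unfolding nbhd_def by blast
      thus False using nb disj \<open>b \<in> I\<close> by blast
    qed
  qed
next
  fix F assume fil: "is_filter (K \<union> I) (\<lambda>a b. a = b \<or> split_prec K I E a b) F"
  have ind: "\<And>u v. u\<in>I \<Longrightarrow> v\<in>I \<Longrightarrow> \<not> E u v"
    and inV: "\<And>u v. E u v \<Longrightarrow> u \<in> K \<union> I \<and> v \<in> K \<union> I"
    using assms unfolding split_graph_def by blast+
  have "nbhd (K \<union> I) E F \<subseteq> K"
  proof
    fix v assume "v \<in> nbhd (K \<union> I) E F"
    then obtain u where v: "v \<in> K \<union> I" "v \<notin> F" "u \<in> F" "E u v" unfolding nbhd_def by blast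
    show "v \<in> K"
    proof (rule ccontr)
      assume "v \<notin> K"
      hence "v \<in> I" using v by blast
      hence "u \<notin> I" using ind v by blast
      hence "u \<in> K" using inV v by blast
      hence "v \<in> F" using fil v \<open>v \<in> I\<close> unfolding is_filter_def split_prec_def by blast
      thus False using v by blast
    qed
  qed
  thus "star_feasible K I E F" unfolding star_feasible_def
    using filter_feasible[OF assms fil] by blast
qed

end
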